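(* Let $n\ge r\ge1$, let $\mathcal{O}\subset\mathbb{R}^{n\times r}$ be open with ${\rm St}(n,r)\subset\mathcal{O}$, let $f:\mathcal{O}\to\mathbb{R}$ be continuously differentiable, and consider (P): $\min_{X\in\mathcal{S}_{+}^{n,r}}f(X)$. Suppose that every global (respectively, local) minimizer of (P) has no zero rows when $n>r>1$, and that for every global (respectively, local) minimizer $X^*$ of (P) there exist $\delta'>0$ and $L'>0$ such that for all $X\in{\rm St}(n,r)$ with $\|X-X^*\|_F\le\delta'$ and all $\overline{X}\in{\rm Proj}_{\mathcal{S}_{+}^{n,r}}(X)$, $f(X)-f(\overline{X})\ge-L'\|X-\overline{X}\|_F^2$. Then for every global (respectively, local) minimizer $X^*$ of (P): 1. if $n=r$ or $n>r=1$, with $\kappa'>0$ a constant such that ${\rm dist}(Z,\mathcal{S}_{+}^{n,r})\le\kappa'{\rm dist}(Z,\mathbb{R}_{+}^{n\times r})$ for all $Z\in{\rm St}(n,r)$, there exists $\delta>0$ such that for all $X\in{\rm St}(n,r)$ with $\|X-X^*\|_F\le\delta$, $f(X)-f(X^* )+(\kappa')^2L'\|\max(0,-X)\|_F^2\ge0$; 2. if $n>r>1$, with $\kappa:=\frac{2.1\sqrt{r}[1+3r(n-r)]}{X^*_{i^*j^*}}$ ($X^*_{i^*j^*}$ the smallest nonzero entry of $X^*$), there exists $\delta>0$ such that for all $\epsilon\ge0$ and all $X\in\mathcal{G}_\epsilon:=\{X\in{\rm St}(n,r):\|\max(0,-X)\|_F^2=\epsilon\}$ with $\|X-X^*\|_F\le\delta$,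 $f(X)-f(X^* )+\kappa^2L'\|\max(0,-X)\|_F^2\ge0$. Consequently, there exists $\widehat{\rho}>0$ such that for every $\rho\ge\widehat{\rho}$ the problem $\min_{X\in{\rm St}(n,r)}\{f(X)+\rho\|\max(0,-X)\|_F^2\}$ has the same set of global optimal solutions as (P).
   Context: ${\rm St}(n,r):=\{X\in\mathbb{R}^{n\times r}: X^\top X=I_r\}$, $\mathbb{R}_{+}^{n\times r}$ the entrywise nonnegative matrices, $\mathcal{S}_{+}^{n,r}:=\mathbb{R}_{+}^{n\times r}\cap{\rm St}(n,r)$, ${\rm dist}$ the Frobenius-norm distance, ${\rm Proj}_\Omega(X)$ the set of nearest points of $\Omega$ to $X$; $\max(0,-X)$ is taken entrywise. *)

theory Defs
  imports "HOL-Analysis.Analysis"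
begin

text \<open>Matrices in R^(n x r) are modelled as real^'r^'n (rows indexed by 'n, columns by 'r);
  n = CARD('n), r = CARD('r). The norm/dist on this type is the Frobenius norm/distance.\<close>

definition Stiefel :: "(real^'r^'n) set" where
  "Stiefel = {X. transpose X ** X = mat 1}"

definition Nonneg :: "(real^'r^'n) set" where
  "Nonneg = {X. \<forall>i j. 0 \<le> X $ i $ j}"

definition Splus :: "(real^'r^'n) set" where
  "Splus = Nonneg \<inter> Stiefel"

definition negpart :: "real^'r^'n \<Rightarrow> real^'r^'n" where
  "negpart X = (\<chi> i j. max 0 (- (X $ i $ j)))"

definition Proj :: "'a::metric_space set \<Rightarrow> 'a \<Rightarrow> 'a set" where
  "Proj \<Omega> X = {Y \<in> \<Omega>. \<forall>Z \<in> \<Omega>. dist X Y \<le> dist X Z}"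

definition argmin_on :: "'a set \<Rightarrow> ('a \<Rightarrow> real) \<Rightarrow> 'a set" where
  "argmin_on S g = {X \<in> S. \<forall>Y \<in> S. g X \<le> g Y}"

definition global_min_P :: "(real^'r^'n \<Rightarrow> real) \<Rightarrow> real^'r^'n \<Rightarrow> bool" where
  "global_min_P f X \<longleftrightarrow> X \<in> Splus \<and> (\<forall>Y \<in> Splus. f X \<le> f Y)"

definition local_min_P :: "(real^'r^'n \<Rightarrow> real) \<Rightarrow> real^'r^'n \<Rightarrow> bool" where
  "local_min_P f X \<longleftrightarrow> X \<in> Splus \<and>
     (\<exists>e>0. \<forall>Y \<in> Splus. dist Y X < e \<longrightarrow> f X \<le> f Y)"

definition has_zero_row :: "real^'r^'n \<Rightarrow> bool" where
  "has_zero_row X \<longleftrightarrow> (\<exists>i. \<forall>j. X $ i $ j = 0)"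

definition min_nonzero_entry :: "real^'r^'n \<Rightarrow> real" where
  "min_nonzero_entry X = Min {X $ i $ j | i j. X $ i $ j \<noteq> 0}"

definition proj_cond :: "(real^'r^'n \<Rightarrow> real) \<Rightarrow> real^'r^'n \<Rightarrow> real \<Rightarrow> real \<Rightarrow> bool" where
  "proj_cond f Xs \<delta>' L' \<longleftrightarrow>
     (\<forall>X \<in> Stiefel. dist X Xs \<le> \<delta>' \<longrightarrow>
        (\<forall>Xb \<in> Proj Splus X. f X - f Xb \<ge> - L' * (dist X Xb)\<^sup>2))"

definition conclusions :: "(real^'r^'n \<Rightarrow> real) \<Rightarrow> real^'r^'n \<Rightarrow> real \<Rightarrow> bool" where
  "conclusions f Xs L' \<longleftrightarrow>
     ((CARD('n) = CARD('r) \<or> (CARD('n) > CARD('r) \<and> CARD('r) = 1)) \<longrightarrow>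
        (\<forall>\<kappa>'>0. (\<forall>Z \<in> (Stiefel :: (real^'r^'n) set).
                     infdist Z Splus \<le> \<kappa>' * infdist Z Nonneg) \<longrightarrow>
          (\<exists>\<delta>>0. \<forall>X \<in> Stiefel. dist X Xs \<le> \<delta> \<longrightarrow>
             f X - f Xs + \<kappa>'\<^sup>2 * L' * (norm (negpart X))\<^sup>2 \<ge> 0)))
   \<and> ((CARD('n) > CARD('r) \<and> CARD('r) > 1) \<longrightarrow>
        (let n = real CARD('n); r = real CARD('r);
             \<kappa> = (21/10) * sqrt r * (1 + 3 * r * (n - r)) / min_nonzero_entry Xs
         in \<exists>\<delta>>0. \<forall>\<epsilon>\<ge>0. \<forall>X.
              X \<in> Stiefel \<and> (norm (negpart X))\<^sup>2 = \<epsilon> \<and> dist X Xs \<le> \<delta> \<longrightarrow>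
              f X - f Xs + \<kappa>\<^sup>2 * L' * (norm (negpart X))\<^sup>2 \<ge> 0))"

end

theory Submission
  imports Defs
begin

lemma norm_sq_mat: "(norm (X::real^'r^'n))\<^sup>2 = (\<Sum>i\<in>UNIV. \<Sum>j\<in>UNIV. (X$i$j)\<^sup>2)"
  unfolding power2_norm_eq_inner by (simp add: inner_vec_def power2_eq_square)

lemma Stiefel_iff: "(X::real^'r^'n) \<in> Stiefel \<longleftrightarrow>
   (\<forall>j k. (\<Sum>i\<in>UNIV. X$i$j * X$i$k) = (if j = k then 1 else 0))"
  by (simp add: Stiefel_def vec_eq_iff matrix_matrix_mult_def transpose_def mat_def)

lemma Stiefel_col: "(X::real^'r^'n) \<in> Stiefel \<Longrightarrow> (\<Sum>i\<in>UNIV. (X$i$j)\<^sup>2) = 1"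
proof -
  assume "X \<in> Stiefel"
  then have "(\<Sum>i\<in>UNIV. X$i$j * X$i$j) = 1" unfolding Stiefel_iff by (metis (full_types))
  then show ?thesis by (simp add: power2_eq_square)
qed

lemma Stiefel_norm_sq: "(X::real^'r^'n) \<in> Stiefel \<Longrightarrow> (norm X)\<^sup>2 = real CARD('r)"
  unfolding norm_sq_mat by (subst sum.swap) (simp add: Stiefel_col)

lemma Stiefel_norm: "(X::real^'r^'n) \<in> Stiefel \<Longrightarrow> norm X = sqrt (real CARD('r))"
  by (metis Stiefel_norm_sq norm_ge_zero real_sqrt_unique)

lemma Stiefel_entry: "(X::real^'r^'n) \<in> Stiefel \<Longrightarrow> \<bar>X$i$j\<bar> \<le> 1"
proof -
  assume "X \<in> Stiefel"
  then have "(\<Sum>l\<in>UNIV. (X$l$j)\<^sup>2) = 1" by (rule Stiefel_col)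
  moreover have "(X$i$j)\<^sup>2 \<le> (\<Sum>l\<in>UNIV. (X$l$j)\<^sup>2)"
    by (rule member_le_sum) auto
  ultimately have "(X$i$j)\<^sup>2 \<le> 1" by simp
  then show ?thesis by (simp add: abs_square_le_1)
qed

lemma entry_le_norm: "\<bar>(X::real^'r^'n)$i$j\<bar> \<le> norm X"
  by (rule order_trans[OF component_le_norm_cart Finite_Cartesian_Product.norm_nth_le])

lemma closed_Stiefel: "closed (Stiefel :: (real^'r^'n) set)"
proof -
  have eq: "(Stiefel::(real^'r^'n) set) = (\<Inter>j. \<Inter>k. {X::real^'r^'n. (\<Sum>i\<in>UNIV. X$i$j * X$i$k) = (if j = k then 1 else 0)})"
    by (auto simp: Stiefel_iff)
  have cl: "closed {X::real^'r^'n. (\<Sum>i\<in>UNIV. X$i$j * X$i$k) = c}" for j k c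
    by (intro closed_Collect_eq continuous_intros continuous_on_component)
  show ?thesis unfolding eq by (intro closed_INT ballI cl)
qed

lemma compact_Stiefel: "compact (Stiefel :: (real^'r^'n) set)"
proof -
  have "bounded (Stiefel :: (real^'r^'n) set)"
    unfolding bounded_iff using Stiefel_norm by fastforce
  then show ?thesis using closed_Stiefel by (simp add: compact_eq_bounded_closed)
qed

lemma closed_Nonneg: "closed (Nonneg :: (real^'r^'n) set)"
proof -
  have eq: "(Nonneg::(real^'r^'n) set) = (\<Inter>i. \<Inter>j. {X::real^'r^'n. 0 \<le> X$i$j})" by (simp add: Nonneg_def set_eq_iff)
  have cl: "closed {X::real^'r^'n. 0 \<le> X$i$j}" for i j
    by (intro closed_Collect_le continuous_intros continuous_on_component)
  show ?thesis unfolding eq by (intro closed_INT ballI cl)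
qed

lemma compact_Splus: "compact (Splus :: (real^'r^'n) set)"
proof -
  have "(Splus::(real^'r^'n) set) = Stiefel \<inter> Nonneg" by (auto simp: Splus_def)
  then show ?thesis using compact_Stiefel closed_Nonneg by (metis compact_Int_closed)
qed

lemma Splus_nonempty:
  assumes "CARD('r) \<le> CARD('n)"
  shows "\<exists>Z::real^'r^'n. Z \<in> Splus"
proof -
  obtain g :: "'r \<Rightarrow> 'n" where g: "inj g"
    using card_le_inj[of "UNIV::'r set" "UNIV::'n set"] assms by auto
  define Z :: "real^'r^'n" where "Z = (\<chi> i j. if i = g j then 1 else 0)"
  have "Z \<in> Stiefel" unfolding Stiefel_iff
  proof (intro allI)
    fix j k
    have "(\<Sum>i\<in>UNIV. Z$i$j * Z$i$k) = (\<Sum>i\<in>UNIV. if i = g j then (if g j = g k then 1 else 0) else 0)"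
      by (intro sum.cong) (auto simp: Z_def)
    also have "\<dots> = (if j = k then 1 else 0)" by (simp add: inj_eq[OF g])
    finally show "(\<Sum>i\<in>UNIV. Z$i$j * Z$i$k) = (if j = k then 1 else 0)" .
  qed
  moreover have "Z \<in> Nonneg" by (auto simp: Nonneg_def Z_def)
  ultimately show ?thesis by (auto simp: Splus_def)
qed

lemma negpart_sq: "(norm (negpart (X::real^'r^'n)))\<^sup>2 = (\<Sum>i\<in>UNIV. \<Sum>j\<in>UNIV. (max 0 (- X$i$j))\<^sup>2)"
  by (simp add: norm_sq_mat negpart_def)

lemma negpart_zero: "norm (negpart (X::real^'r^'n)) = 0 \<Longrightarrow> X \<in> Nonneg"
proof -
  assume "norm (negpart X) = 0"
  then have h: "negpart X = 0" by simp
  have "0 \<le> X$i$j" for i j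
  proof -
    have "max 0 (- X$i$j) = 0" using h by (simp add: negpart_def vec_eq_iff)
    then have "- X$i$j \<le> 0" by (metis max.cobounded2)
    then show ?thesis by simp
  qed
  then show ?thesis by (simp add: Nonneg_def)
qed

lemma cont_negpart: "continuous_on S (\<lambda>X::real^'r^'n. norm (negpart X))"
  unfolding negpart_def
  by (intro continuous_intros continuous_on_component)

lemma infdist_Nonneg: "infdist (X::real^'r^'n) Nonneg \<le> norm (negpart X)"
proof -
  have "X + negpart X \<in> Nonneg" by (auto simp: Nonneg_def negpart_def)
  then have "infdist X Nonneg \<le> dist X (X + negpart X)" by (rule infdist_le)
  also have "\<dots> = norm (negpart X)" by (simp add: dist_norm)
  finally show ?thesis .
qed

lemma Proj_ex:
  assumes "CARD('r) \<le> CARD('n)"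
  shows "\<exists>Y. Y \<in> Proj (Splus::(real^'r^'n) set) X"
proof -
  have "Splus \<noteq> ({}::(real^'r^'n) set)" using Splus_nonempty[OF assms] by auto
  then obtain Y where "Y \<in> Splus" "\<And>Z. Z \<in> Splus \<Longrightarrow> dist X Y \<le> dist X Z"
    using distance_attains_inf[of Splus X] compact_Splus compact_imp_closed by metis
  then show ?thesis by (auto simp: Proj_def)
qed

lemma Proj_infdist: "Y \<in> Proj S X \<Longrightarrow> dist X Y = infdist X S"
proof -
  assume a: "Y \<in> Proj S X"
  then have Y: "Y \<in> S" and m: "\<And>Z. Z \<in> S \<Longrightarrow> dist X Y \<le> dist X Z" by (auto simp: Proj_def)
  have "infdist X S \<le> dist X Y" using Y by (rule infdist_le)
  moreover have "dist X Y \<le> infdist X S"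
  proof -
    have "S \<noteq> {}" using Y by auto
    then have "infdist X S = (INF a\<in>S. dist X a)" by (rule infdist_notempty)
    moreover have "dist X Y \<le> (INF a\<in>S. dist X a)"
      using Y m by (intro cINF_greatest) auto
    ultimately show ?thesis by simp
  qed
  ultimately show ?thesis by simp
qed

lemma sumsq_le_sqsum:
  fixes f :: "'a \<Rightarrow> real"
  assumes "finite A" "\<And>x. x \<in> A \<Longrightarrow> 0 \<le> f x"
  shows "(\<Sum>x\<in>A. (f x)\<^sup>2) \<le> (\<Sum>x\<in>A. f x)\<^sup>2"
proof -
  have "(\<Sum>x\<in>A. (f x)\<^sup>2) \<le> (\<Sum>x\<in>A. f x * (\<Sum>y\<in>A. f y))"
  proof (rule sum_mono)
    fix x assume x: "x \<in> A"
    have "f x \<le> (\<Sum>y\<in>A. f y)" using assms x by (intro member_le_sum) auto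
    then show "(f x)\<^sup>2 \<le> f x * (\<Sum>y\<in>A. f y)"
      using assms(2)[OF x] by (simp add: power2_eq_square mult_left_mono)
  qed
  also have "\<dots> = (\<Sum>x\<in>A. f x)\<^sup>2" by (simp add: power2_eq_square sum_distrib_right)
  finally show ?thesis .
qed

lemma cs_card:
  fixes f :: "'a \<Rightarrow> real"
  shows "(\<Sum>x\<in>A. f x)\<^sup>2 \<le> real (card A) * (\<Sum>x\<in>A. (f x)\<^sup>2)"
  using Cauchy_Schwarz_ineq_sum[of "\<lambda>x. 1" f A] by simp

lemma sqrt_ge_self: "0 \<le> x \<Longrightarrow> x \<le> 1 \<Longrightarrow> x \<le> sqrt (x::real)"
  by (intro real_le_rsqrt) (simp add: power2_eq_square mult_left_le_one_le)

lemma normalize_cols: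
  fixes Y :: "real^'r^'n" and t :: "'r \<Rightarrow> real"
  assumes Yn: "Y \<in> Nonneg"
    and orth: "\<And>j k. j \<noteq> k \<Longrightarrow> (\<Sum>l\<in>UNIV. Y$l$j * Y$l$k) = 0"
    and cn: "\<And>j. (\<Sum>l\<in>UNIV. (Y$l$j)\<^sup>2) = 1 - t j"
    and tb: "\<And>j. 0 \<le> t j" "\<And>j. t j < 1"
  shows "\<exists>Z\<in>Splus. dist Y Z \<le> (\<Sum>j\<in>UNIV. t j)"
proof -
  define s where "s j = sqrt (1 - t j)" for j
  have s_pos: "0 < s j" for j using tb(2)[of j] by (simp add: s_def)
  have s_sq: "(s j)\<^sup>2 = 1 - t j" for j using tb(2)[of j] by (simp add: s_def)
  have s_le: "s j \<le> 1" for j using tb(1)[of j] by (simp add: s_def)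
  have s_ge: "1 - t j \<le> s j" for j using tb[of j] unfolding s_def by (intro sqrt_ge_self) auto
  define Z :: "real^'r^'n" where "Z = (\<chi> l j. Y$l$j / s j)"
  have "Z \<in> Stiefel" unfolding Stiefel_iff
  proof (intro allI)
    fix j k
    have "(\<Sum>l\<in>UNIV. Z$l$j * Z$l$k) = (\<Sum>l\<in>UNIV. Y$l$j * Y$l$k) / (s j * s k)"
      by (simp add: Z_def sum_divide_distrib)
    also have "\<dots> = (if j = k then 1 else 0)"
    proof (cases "j = k")
      case True
      have a: "(\<Sum>l\<in>UNIV. Y$l$j * Y$l$k) = 1 - t j"
        using cn[of j] True by (simp add: power2_eq_square)
      have b: "s j * s k = 1 - t j" using s_sq[of j] True by (simp add: power2_eq_square)
      have c: "1 - t j \<noteq> 0" using tb(2)[of j] by simp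
      show ?thesis unfolding a b using c True by simp
    next
      case False
      then show ?thesis using orth[OF False] by simp
    qed
    finally show "(\<Sum>l\<in>UNIV. Z$l$j * Z$l$k) = (if j = k then 1 else 0)" .
  qed
  moreover have "Z \<in> Nonneg" using Yn s_pos by (auto simp: Nonneg_def Z_def less_imp_le)
  ultimately have ZS: "Z \<in> Splus" by (simp add: Splus_def)
  have "(dist Y Z)\<^sup>2 = (\<Sum>l\<in>UNIV. \<Sum>j\<in>UNIV. (Y$l$j - Y$l$j / s j)\<^sup>2)"
    by (simp add: dist_norm norm_sq_mat Z_def)
  also have "\<dots> = (\<Sum>j\<in>UNIV. \<Sum>l\<in>UNIV. (Y$l$j)\<^sup>2 * (1 - 1 / s j)\<^sup>2)"
    by (subst sum.swap) (simp add: power2_eq_square algebra_simps)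
  also have "\<dots> = (\<Sum>j\<in>UNIV. (1 - s j)\<^sup>2)"
  proof (rule sum.cong)
    fix j :: 'r
    have "(\<Sum>l\<in>UNIV. (Y$l$j)\<^sup>2 * (1 - 1 / s j)\<^sup>2) = (s j)\<^sup>2 * (1 - 1 / s j)\<^sup>2"
      by (simp add: sum_distrib_right[symmetric] cn s_sq)
    also have "\<dots> = (1 - s j)\<^sup>2" using s_pos[of j]
      by (simp add: power2_eq_square field_simps)
    finally show "(\<Sum>l\<in>UNIV. (Y$l$j)\<^sup>2 * (1 - 1 / s j)\<^sup>2) = (1 - s j)\<^sup>2" .
  qed simp
  also have "\<dots> \<le> (\<Sum>j\<in>UNIV. (t j)\<^sup>2)"
  proof (rule sum_mono)
    fix j
    have "0 \<le> 1 - s j" "1 - s j \<le> t j" using s_le[of j] s_ge[of j] by auto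
    then show "(1 - s j)\<^sup>2 \<le> (t j)\<^sup>2" by (intro power_mono) auto
  qed
  also have "\<dots> \<le> (\<Sum>j\<in>UNIV. t j)\<^sup>2" by (rule sumsq_le_sqsum) (auto simp: tb)
  finally have "(dist Y Z)\<^sup>2 \<le> (\<Sum>j\<in>UNIV. t j)\<^sup>2" .
  moreover have "0 \<le> (\<Sum>j\<in>UNIV. t j)" by (simp add: sum_nonneg tb)
  ultimately have "dist Y Z \<le> (\<Sum>j\<in>UNIV. t j)" by (rule power2_le_imp_le)
  then show ?thesis using ZS by blast
qed

lemma supp_unique:
  fixes Xs :: "real^'r^'n"
  assumes XsS: "Xs \<in> Splus" and a: "Xs$i$j \<noteq> 0" and b: "Xs$i$k \<noteq> 0"
  shows "j = k"
proof (rule ccontr)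
  assume jk: "j \<noteq> k"
  have nn: "0 \<le> Xs$l$c" for l c using XsS by (auto simp: Splus_def Nonneg_def)
  have "(\<Sum>l\<in>UNIV. Xs$l$j * Xs$l$k) = 0" using XsS jk by (auto simp: Splus_def Stiefel_iff)
  moreover have "Xs$i$j * Xs$i$k \<le> (\<Sum>l\<in>UNIV. Xs$l$j * Xs$l$k)"
    by (rule member_le_sum) (auto simp: nn)
  moreover have "0 < Xs$i$j * Xs$i$k"
    using nn[of i j] nn[of i k] a b by (simp add: less_le)
  ultimately show False by linarith
qed

lemma mne_facts:
  fixes Xs :: "real^'r^'n"
  assumes XsS: "Xs \<in> Splus" and nz: "\<not> has_zero_row Xs"
  shows "0 < min_nonzero_entry Xs" "min_nonzero_entry Xs \<le> 1"
        "\<And>i j. Xs$i$j \<noteq> 0 \<Longrightarrow> min_nonzero_entry Xs \<le> Xs$i$j"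
proof -
  let ?M = "{Xs$i$j | i j. Xs$i$j \<noteq> 0}"
  have fin: "finite ?M"
  proof -
    have "?M \<subseteq> (\<lambda>p. Xs$fst p$snd p) ` UNIV"
    proof
      fix x assume "x \<in> ?M"
      then obtain i j where "x = Xs$i$j" by auto
      then show "x \<in> (\<lambda>p. Xs$fst p$snd p) ` UNIV" by (intro image_eqI[of x _ "(i,j)"]) auto
    qed
    then show ?thesis by (rule finite_subset) simp
  qed
  have "\<exists>j. Xs$(undefined::'n)$j \<noteq> 0" using nz by (auto simp: has_zero_row_def)
  then have ne: "?M \<noteq> {}" by auto
  have "min_nonzero_entry Xs \<in> ?M" unfolding min_nonzero_entry_def using fin ne by (rule Min_in)
  then obtain i j where ij: "min_nonzero_entry Xs = Xs$i$j" "Xs$i$j \<noteq> 0" by auto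
  have nn: "0 \<le> Xs$i$j" using XsS by (auto simp: Splus_def Nonneg_def)
  show "0 < min_nonzero_entry Xs" using ij nn by simp
  have "\<bar>Xs$i$j\<bar> \<le> 1" using XsS Stiefel_entry by (auto simp: Splus_def)
  then show "min_nonzero_entry Xs \<le> 1" using ij by simp
  show "\<And>i j. Xs$i$j \<noteq> 0 \<Longrightarrow> min_nonzero_entry Xs \<le> Xs$i$j"
    unfolding min_nonzero_entry_def using fin by (intro Min_le) auto
qed

lemma sum_sq_rows:
  fixes X :: "real^'r^'n"
  assumes XS: "X \<in> Stiefel"
  shows "(\<Sum>l\<in>UNIV. (\<Sum>j\<in>UNIV. X$l$j)\<^sup>2 - (\<Sum>j\<in>UNIV. (X$l$j)\<^sup>2)) = 0"
proof -
  have "(\<Sum>l\<in>UNIV. (\<Sum>j\<in>UNIV. X$l$j)\<^sup>2) = (\<Sum>l\<in>UNIV. \<Sum>j\<in>UNIV. \<Sum>k\<in>UNIV. X$l$j * X$l$k)"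
    by (simp add: power2_eq_square sum_product)
  also have "\<dots> = (\<Sum>j\<in>UNIV. \<Sum>l\<in>UNIV. \<Sum>k\<in>UNIV. X$l$j * X$l$k)"
    by (rule sum.swap)
  also have "\<dots> = (\<Sum>j\<in>UNIV. \<Sum>k\<in>UNIV. \<Sum>l\<in>UNIV. X$l$j * X$l$k)"
    by (intro sum.cong refl) (rule sum.swap)
  also have "\<dots> = real CARD('r)"
  proof -
    have o: "\<And>j k. (\<Sum>l\<in>UNIV. X$l$j * X$l$k) = (if j = k then 1 else 0)"
      using XS Stiefel_iff by blast
    show ?thesis by (simp add: o)
  qed
  finally have 1: "(\<Sum>l\<in>UNIV. (\<Sum>j\<in>UNIV. X$l$j)\<^sup>2) = real CARD('r)" .
  have 2: "(\<Sum>l\<in>UNIV. (\<Sum>j\<in>UNIV. (X$l$j)\<^sup>2)) = real CARD('r)"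
    using Stiefel_norm_sq[OF XS] by (simp add: norm_sq_mat)
  show ?thesis using 1 2 by (simp add: sum_subtractf)
qed

lemma eb_main:
  fixes Xs X :: "real^'r^'n"
  assumes XsS: "Xs \<in> Splus" and nz: "\<not> has_zero_row Xs"
    and XS: "X \<in> Stiefel" and dX: "dist X Xs \<le> min_nonzero_entry Xs / 12"
  shows "\<exists>Z\<in>Splus. dist X Z \<le> (6/5 + 9/5 * sqrt (real CARD('n) * real CARD('r)) / min_nonzero_entry Xs) * norm (negpart X)"
proof -
  define m where "m = min_nonzero_entry Xs"
  have m0: "0 < m" and m1: "m \<le> 1" and mle: "\<And>i j. Xs$i$j \<noteq> 0 \<Longrightarrow> m \<le> Xs$i$j"
    using mne_facts[OF XsS nz] by (auto simp: m_def)
  define sg where "sg i = (SOME j. Xs$i$j \<noteq> 0)" for i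
  have sg1: "Xs$i$(sg i) \<noteq> 0" for i
  proof -
    have "\<exists>j. Xs$i$j \<noteq> 0" using nz by (auto simp: has_zero_row_def)
    then show ?thesis unfolding sg_def by (rule someI_ex)
  qed
  have sg2: "j \<noteq> sg i \<Longrightarrow> Xs$i$j = 0" for i j using supp_unique[OF XsS _ sg1[of i]] by blast
  have ent: "\<bar>X$i$j - Xs$i$j\<bar> \<le> m/12" for i j
    using entry_le_norm[of "X - Xs" i j] dX by (simp add: dist_norm m_def)
  have xlow: "11*m/12 \<le> X$l$(sg l)" for l
  proof -
    have "- (X$l$(sg l) - Xs$l$(sg l)) \<le> m/12" using ent[of l "sg l"] by (rule abs_le_D2)
    then show ?thesis using mle[OF sg1[of l]] by linarith
  qed
  have xup: "X$l$j \<le> 1" for l j using Stiefel_entry[OF XS, of l j] by simp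
  define E :: "real^'r^'n" where "E = (\<chi> l j. if j = sg l then 0 else X$l$j)"
  define Y :: "real^'r^'n" where "Y = (\<chi> l j. if j = sg l then X$l$j else 0)"
  define t where "t j = (\<Sum>l\<in>UNIV. (E$l$j)\<^sup>2)" for j
  define e where "e = norm E"
  define nu where "nu = norm (negpart X)"
  have e0: "0 \<le> e" by (simp add: e_def)
  have nu0: "0 \<le> nu" by (simp add: nu_def)
  have esq: "e\<^sup>2 = (\<Sum>j\<in>UNIV. t j)"
    unfolding e_def t_def norm_sq_mat by (rule sum.swap)
  have "e\<^sup>2 \<le> (dist X Xs)\<^sup>2"
    unfolding e_def dist_norm norm_sq_mat
  proof (intro sum_mono)
    fix l j
    show "(E$l$j)\<^sup>2 \<le> ((X - Xs)$l$j)\<^sup>2"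
      using sg2[of j l] by (cases "j = sg l") (auto simp: E_def)
  qed
  then have "e \<le> dist X Xs" by (rule power2_le_imp_le) simp
  then have ele: "e \<le> m/12" using dX by (simp add: m_def)
  have e1: "e\<^sup>2 < 1"
  proof -
    have "e\<^sup>2 \<le> (m/12)\<^sup>2" using ele e0 by (intro power_mono) auto
    also have "\<dots> < 1" using m0 m1 mult_le_one[of m m] by (simp add: power2_eq_square)
    finally show ?thesis .
  qed
  have t0: "0 \<le> t j" for j by (simp add: t_def sum_nonneg)
  have t1: "t j < 1" for j
  proof -
    have "t j \<le> (\<Sum>j\<in>UNIV. t j)" by (rule member_le_sum) (auto simp: t0)
    then show ?thesis using esq e1 by simp
  qed
  have Yn: "Y \<in> Nonneg"
  proof -
    have "0 \<le> Y$l$j" for l j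
      using xlow[of l] m0 by (auto simp: Y_def)
    then show ?thesis by (simp add: Nonneg_def)
  qed
  have orth: "(\<Sum>l\<in>UNIV. Y$l$j * Y$l$k) = 0" if jk: "j \<noteq> k" for j k
    using jk by (intro sum.neutral ballI) (auto simp: Y_def)
  have cn: "(\<Sum>l\<in>UNIV. (Y$l$j)\<^sup>2) = 1 - t j" for j
  proof -
    have "(\<Sum>l\<in>UNIV. (Y$l$j)\<^sup>2) + t j = (\<Sum>l\<in>UNIV. (Y$l$j)\<^sup>2 + (E$l$j)\<^sup>2)"
      by (simp add: t_def sum.distrib)
    also have "\<dots> = (\<Sum>l\<in>UNIV. (X$l$j)\<^sup>2)"
      by (intro sum.cong refl) (auto simp: Y_def E_def)
    also have "\<dots> = 1" by (rule Stiefel_col[OF XS])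
    finally show ?thesis by simp
  qed
  obtain Z where ZS: "Z \<in> Splus" and dYZ: "dist Y Z \<le> (\<Sum>j\<in>UNIV. t j)"
    using normalize_cols[OF Yn orth cn t0 t1] by blast
  have XY: "X - Y = E" by (simp add: vec_eq_iff E_def Y_def)
  have dXZ: "dist X Z \<le> e + e\<^sup>2"
  proof -
    have "dist X Z \<le> dist X Y + dist Y Z" by (rule dist_triangle)
    also have "dist X Y = e" by (simp add: dist_norm XY e_def)
    finally show ?thesis using dYZ esq by simp
  qed
  define P where "P l j = (if j = sg l then 0 else max 0 (X$l$j))" for l j
  define N where "N l j = max 0 (- X$l$j)" for l j
  define SP where "SP = (\<Sum>l\<in>UNIV. \<Sum>j\<in>UNIV. P l j)"
  define SN where "SN = (\<Sum>l\<in>UNIV. \<Sum>j\<in>UNIV. N l j)"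
  have P0: "0 \<le> P l j" for l j by (simp add: P_def)
  have N0: "0 \<le> N l j" for l j by (simp add: N_def)
  have EPN: "E$l$j = P l j - N l j" for l j
  proof (cases "j = sg l")
    case True
    then have "0 < X$l$j" using xlow[of l] m0 by simp
    then show ?thesis using True by (simp add: E_def P_def N_def)
  next
    case False
    then show ?thesis by (simp add: E_def P_def N_def max_def)
  qed
  have row: "2*(11*m/12)*(\<Sum>j\<in>UNIV. P l j) - 2*(\<Sum>j\<in>UNIV. N l j) - (\<Sum>j\<in>UNIV. (E$l$j)\<^sup>2)
      \<le> (\<Sum>j\<in>UNIV. X$l$j)\<^sup>2 - (\<Sum>j\<in>UNIV. (X$l$j)\<^sup>2)" for l
  proof -
    define x where "x = X$l$(sg l)"
    define U where "U = (\<Sum>j\<in>UNIV. E$l$j)"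
    define S where "S = (\<Sum>j\<in>UNIV. (E$l$j)\<^sup>2)"
    define PP where "PP = (\<Sum>j\<in>UNIV. P l j)"
    define NN where "NN = (\<Sum>j\<in>UNIV. N l j)"
    have dec: "X$l$j = (if j = sg l then x else 0) + E$l$j" for j
      by (simp add: E_def x_def)
    have dec2: "(X$l$j)\<^sup>2 = (if j = sg l then x\<^sup>2 else 0) + (E$l$j)\<^sup>2" for j
      by (simp add: E_def x_def)
    have sx: "(\<Sum>j\<in>UNIV. X$l$j) = x + U"
      by (simp add: dec[of _] sum.distrib U_def)
    have sx2: "(\<Sum>j\<in>UNIV. (X$l$j)\<^sup>2) = x\<^sup>2 + S"
      by (simp add: dec2 sum.distrib S_def)
    have UPN: "U = PP - NN" by (simp add: U_def PP_def NN_def EPN sum_subtractf)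
    have PP0: "0 \<le> PP" by (simp add: PP_def sum_nonneg P0)
    have NN0: "0 \<le> NN" by (simp add: NN_def sum_nonneg N0)
    have xl: "11*m/12 \<le> x" using xlow[of l] by (simp add: x_def)
    have xu: "x \<le> 1" using xup by (simp add: x_def)
    have a1: "(11*m/12) * PP \<le> x * PP" using xl PP0 by (rule mult_right_mono)
    have a2: "x * NN \<le> NN" using xu NN0 mult_right_mono[of x 1 NN] by simp
    have "(x + U)\<^sup>2 - (x\<^sup>2 + S) = 2*(x*PP) - 2*(x*NN) + U\<^sup>2 - S"
      by (simp add: UPN power2_eq_square algebra_simps)
    moreover have "0 \<le> U\<^sup>2" by simp
    ultimately have "2*((11*m/12)*PP) - 2*NN - S \<le> (x + U)\<^sup>2 - (x\<^sup>2 + S)"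
      using a1 a2 by linarith
    then show ?thesis by (simp add: sx sx2 PP_def NN_def S_def)
  qed
  have "(\<Sum>l\<in>UNIV. 2*(11*m/12)*(\<Sum>j\<in>UNIV. P l j) - 2*(\<Sum>j\<in>UNIV. N l j) - (\<Sum>j\<in>UNIV. (E$l$j)\<^sup>2))
      \<le> (\<Sum>l\<in>UNIV. (\<Sum>j\<in>UNIV. X$l$j)\<^sup>2 - (\<Sum>j\<in>UNIV. (X$l$j)\<^sup>2))"
    by (rule sum_mono) (rule row)
  also have "\<dots> = 0" by (rule sum_sq_rows[OF XS])
  finally have "2*(11*m/12)*SP - 2*SN - e\<^sup>2 \<le> 0"
    unfolding SP_def SN_def e_def norm_sq_mat
    by (simp add: sum_subtractf sum_distrib_left)
  then have key: "(11*m/12)*SP \<le> SN + e\<^sup>2/2" by simp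
  define Pm :: "real^'r^'n" where "Pm = (\<chi> l j. P l j)"
  have EPm: "E = Pm - negpart X" by (simp add: vec_eq_iff Pm_def negpart_def EPN N_def)
  have eP: "e \<le> norm Pm + nu"
    unfolding e_def nu_def EPm by (rule norm_triangle_ineq4)
  have PmSP: "norm Pm \<le> SP"
  proof -
    have "(norm Pm)\<^sup>2 = (\<Sum>l\<in>UNIV. \<Sum>j\<in>UNIV. (P l j)\<^sup>2)" by (simp add: norm_sq_mat Pm_def)
    also have "\<dots> \<le> (\<Sum>l\<in>UNIV. (\<Sum>j\<in>UNIV. P l j)\<^sup>2)"
      by (intro sum_mono sumsq_le_sqsum) (auto simp: P0)
    also have "\<dots> \<le> (\<Sum>l\<in>UNIV. (\<Sum>j\<in>UNIV. P l j))\<^sup>2"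
      by (intro sumsq_le_sqsum) (auto simp: P0 sum_nonneg)
    finally have "(norm Pm)\<^sup>2 \<le> SP\<^sup>2" by (simp add: SP_def)
    moreover have "0 \<le> SP" by (simp add: SP_def sum_nonneg P0)
    ultimately show ?thesis by (rule power2_le_imp_le)
  qed
  define s where "s = sqrt (real CARD('n) * real CARD('r))"
  have s0: "0 \<le> s" by (simp add: s_def)
  have SNb: "SN \<le> s * nu"
  proof -
    have "SN\<^sup>2 \<le> real CARD('n) * (\<Sum>l\<in>UNIV. (\<Sum>j\<in>UNIV. N l j)\<^sup>2)"
      unfolding SN_def by (rule cs_card)
    also have "\<dots> \<le> real CARD('n) * (\<Sum>l\<in>UNIV. real CARD('r) * (\<Sum>j\<in>UNIV. (N l j)\<^sup>2))"
      by (intro mult_left_mono sum_mono cs_card) auto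
    also have "\<dots> = real CARD('n) * real CARD('r) * nu\<^sup>2"
      by (simp add: nu_def negpart_sq N_def sum_distrib_left mult.assoc)
    finally have "SN\<^sup>2 \<le> real CARD('n) * real CARD('r) * nu\<^sup>2" .
    then have "SN \<le> sqrt (real CARD('n) * real CARD('r) * nu\<^sup>2)" by (rule real_le_rsqrt)
    also have "\<dots> = s * nu" using nu0 by (simp add: s_def real_sqrt_mult)
    finally show ?thesis .
  qed
  define w where "w = s * nu / m"
  have w0: "0 \<le> w" using s0 nu0 m0 by (simp add: w_def)
  have snu: "s * nu = m * w" using m0 by (simp add: w_def)
  have h1: "e * e \<le> (m/12) * e" using ele e0 by (rule mult_right_mono)
  have h2: "(11*m/12) * e \<le> (11*m/12) * SP + (11*m/12) * nu"
    using eP PmSP m0 mult_left_mono[of e "SP + nu" "11*m/12"] by (simp add: distrib_left)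
  have "m * ((21/24) * e) \<le> m * (w + (11/12) * nu)"
    using key SNb h1 h2 snu by (simp add: power2_eq_square algebra_simps)
  then have h3: "(21/24) * e \<le> w + (11/12) * nu" using m0 by simp
  have "e * e \<le> e / 12" using h1 m1 e0 mult_right_mono[of m 1 e] by simp
  then have "dist X Z \<le> (13/12) * e" using dXZ by (simp add: power2_eq_square)
  also have "\<dots> \<le> (9/5) * w + (6/5) * nu" using h3 w0 nu0 by linarith
  also have "\<dots> = (6/5 + 9/5 * s / m) * nu" using m0 by (simp add: w_def field_simps)
  finally show ?thesis using ZS by (auto simp: m_def s_def nu_def)
qed

lemma eb_r1:
  fixes X :: "real^'r^'n"
  assumes r1: "CARD('r) = 1" and XS: "X \<in> Stiefel"
  shows "\<exists>Z\<in>Splus. dist X Z \<le> 2 * norm (negpart X)"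
proof -
  obtain j0 :: 'r where U: "UNIV = {j0}" using r1 card_1_singletonE by blast
  have allj: "j = j0" for j :: 'r using U by auto
  define nu where "nu = norm (negpart X)"
  have nu0: "0 \<le> nu" by (simp add: nu_def)
  have sq: "(max 0 a)\<^sup>2 + (max 0 (- a))\<^sup>2 = a\<^sup>2" for a :: real
    by (cases "0 \<le> a") (auto simp: max_def)
  have nX: "norm X = 1" using Stiefel_norm[OF XS] r1 by simp
  have "(\<Sum>i\<in>UNIV. \<Sum>j\<in>UNIV. (max 0 (- X$i$j))\<^sup>2) \<le> (\<Sum>i\<in>UNIV. \<Sum>j\<in>UNIV. (X$i$j)\<^sup>2)"
  proof (intro sum_mono)
    fix i j
    show "(max 0 (- X$i$j))\<^sup>2 \<le> (X$i$j)\<^sup>2" using sq[of "X$i$j"] zero_le_power2[of "max 0 (X$i$j)"] by linarith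
  qed
  then have "nu\<^sup>2 \<le> (norm X)\<^sup>2" unfolding nu_def negpart_sq by (simp only: norm_sq_mat)
  then have nle: "nu \<le> 1" using nX nu0 by (simp add: power_le_one_iff abs_square_le_1)
  have "CARD('r) \<le> CARD('n)" using r1 by (simp add: Suc_leI)
  then obtain Z0 where Z0: "Z0 \<in> (Splus :: (real^'r^'n) set)" using Splus_nonempty by blast
  show ?thesis
  proof (cases "nu < 1")
    case False
    then have nu1: "nu = 1" using nle by simp
    have nZ0: "norm Z0 = 1" using Z0 Stiefel_norm[of Z0] r1 by (auto simp: Splus_def)
    have "dist X Z0 \<le> norm X + norm Z0" unfolding dist_norm by (rule norm_triangle_ineq4)
    then have "dist X Z0 \<le> 2 * nu" using nX nZ0 nu1 by simp
    then show ?thesis using Z0 by (auto simp: nu_def)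
  next
    case True
    define Y :: "real^'r^'n" where "Y = (\<chi> l j. max 0 (X$l$j))"
    have Yn: "Y \<in> Nonneg" by (simp add: Y_def Nonneg_def)
    have orth: "(\<Sum>l\<in>UNIV. Y$l$j * Y$l$k) = 0" if "j \<noteq> k" for j k
      using that allj[of j] allj[of k] by simp
    have nusq: "nu\<^sup>2 = (\<Sum>l\<in>UNIV. (max 0 (- X$l$j))\<^sup>2)" for j
      using allj[of j] by (simp add: nu_def negpart_sq U)
    have cn: "(\<Sum>l\<in>UNIV. (Y$l$j)\<^sup>2) = 1 - nu\<^sup>2" for j
    proof -
      have "(\<Sum>l\<in>UNIV. (Y$l$j)\<^sup>2) + nu\<^sup>2 = (\<Sum>l\<in>UNIV. (max 0 (X$l$j))\<^sup>2 + (max 0 (- X$l$j))\<^sup>2)"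
        by (simp add: nusq[of j] Y_def sum.distrib)
      also have "\<dots> = (\<Sum>l\<in>UNIV. (X$l$j)\<^sup>2)" by (simp add: sq)
      also have "\<dots> = 1" by (rule Stiefel_col[OF XS])
      finally show ?thesis by simp
    qed
    have t1: "nu\<^sup>2 < 1" using True nu0 by (simp add: power_less_one_iff abs_square_less_1)
    obtain Z where ZS: "Z \<in> Splus" and dYZ: "dist Y Z \<le> (\<Sum>j\<in>(UNIV::'r set). nu\<^sup>2)"
      using normalize_cols[of Y "\<lambda>j. nu\<^sup>2", OF Yn orth cn] t1 by auto
    have "X - Y = - negpart X"
      by (simp add: vec_eq_iff Y_def negpart_def max_def)
    then have dXY: "dist X Y = nu" by (simp add: dist_norm nu_def)
    have "dist X Z \<le> dist X Y + dist Y Z" by (rule dist_triangle)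
    also have "\<dots> \<le> nu + nu\<^sup>2" using dXY dYZ by (simp add: U)
    also have "\<dots> \<le> 2 * nu" using nle nu0 mult_right_mono[of nu 1 nu] by (simp add: power2_eq_square)
    finally show ?thesis using ZS by (auto simp: nu_def)
  qed
qed

lemma const_le:
  fixes n r m :: real
  assumes "r + 1 \<le> n" "2 \<le> r" "0 < m" "m \<le> 1"
  shows "6/5 + 9/5 * sqrt (n * r) / m \<le> (21/10) * sqrt r * (1 + 3 * r * (n - r)) / m"
proof -
  have sr1: "1 \<le> sqrt r" using assms by simp
  have sn: "sqrt n \<le> n"
  proof -
    have "n \<le> n * n" using assms mult_left_mono[of 1 n n] by simp
    then have "sqrt n \<le> sqrt (n * n)" by (rule real_sqrt_le_mono)
    also have "\<dots> = n" using assms by simp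
    finally show ?thesis .
  qed
  have "0 \<le> (r - 1) * (n - r - 1)" using assms by simp
  then have rn: "n - 1 \<le> r * (n - r)" by (simp add: algebra_simps)
  have a: "9/5 * sqrt n \<le> 63/10 * (r * (n - r))" using sn rn assms by linarith
  have b: "9/5 * sqrt n * sqrt r \<le> 63/10 * (r * (n - r)) * sqrt r"
    using a sr1 by (intro mult_right_mono) auto
  have c: "6/5 * m \<le> 21/10 * sqrt r" using sr1 assms by linarith
  have "6/5 * m + 9/5 * sqrt (n * r) \<le> (21/10) * sqrt r * (1 + 3 * r * (n - r))"
    using b c by (simp add: real_sqrt_mult algebra_simps)
  then have "(6/5 * m + 9/5 * sqrt (n * r)) / m \<le> (21/10) * sqrt r * (1 + 3 * r * (n - r)) / m"
    using assms by (intro divide_right_mono) auto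
  moreover have "(6/5 * m + 9/5 * sqrt (n * r)) / m = 6/5 + 9/5 * sqrt (n * r) / m"
    using assms by (simp add: field_simps)
  ultimately show ?thesis by simp
qed

lemma no_zero_row_square:
  fixes Xs :: "real^'r^'n"
  assumes XsS: "Xs \<in> Splus" and sq: "CARD('n) = CARD('r)"
  shows "\<not> has_zero_row Xs"
proof -
  have col: "\<exists>i. Xs$i$j \<noteq> 0" for j
  proof (rule ccontr)
    assume "\<not> (\<exists>i. Xs$i$j \<noteq> 0)"
    then have "(\<Sum>i\<in>UNIV. (Xs$i$j)\<^sup>2) = 0" by simp
    moreover have "(\<Sum>i\<in>UNIV. (Xs$i$j)\<^sup>2) = 1" using XsS Stiefel_col by (auto simp: Splus_def)
    ultimately show False by simp
  qed
  define g where "g j = (SOME i. Xs$i$j \<noteq> 0)" for j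
  have g1: "Xs$(g j)$j \<noteq> 0" for j unfolding g_def by (rule someI_ex[OF col])
  have inj: "inj g"
  proof (rule injI)
    fix j k assume "g j = g k"
    then show "j = k" using supp_unique[OF XsS g1[of j]] g1[of k] by simp
  qed
  have "card (range g) = CARD('r)" using inj by (simp add: card_image)
  then have "range g = UNIV" using sq by (intro card_subset_eq) auto
  then have "\<exists>j. g j = i" for i by (metis UNIV_I image_iff)
  then show ?thesis unfolding has_zero_row_def using g1 by metis
qed

lemma loc_ineq:
  fixes f :: "real^'r^'n \<Rightarrow> real" and Xs :: "real^'r^'n"
  assumes rn: "CARD('r) \<le> CARD('n)" and lm: "local_min_P f Xs" and pc: "proj_cond f Xs d' L'"
    and L0: "0 \<le> L'" and c0: "0 \<le> c" and d0: "0 < d0"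
    and d'0: "0 < d'"
    and eb: "\<forall>X\<in>Stiefel. dist X Xs \<le> d0 \<longrightarrow> (\<exists>Z\<in>Splus. dist X Z \<le> c * norm (negpart X))"
  shows "\<exists>\<delta>>0. \<forall>X\<in>Stiefel. dist X Xs \<le> \<delta> \<longrightarrow> 0 \<le> f X - f Xs + c\<^sup>2 * L' * (norm (negpart X))\<^sup>2"
proof -
  obtain e where e0: "0 < e" and XsS: "Xs \<in> Splus" and emin: "\<forall>Y\<in>Splus. dist Y Xs < e \<longrightarrow> f Xs \<le> f Y"
    using lm unfolding local_min_P_def by blast
  define \<delta> where "\<delta> = min d0 (min d' (e/3))"
  have \<delta>0: "0 < \<delta>" using d0 d'0 e0 by (simp add: \<delta>_def)
  have "0 \<le> f X - f Xs + c\<^sup>2 * L' * (norm (negpart X))\<^sup>2" if XS: "X \<in> Stiefel" and dX: "dist X Xs \<le> \<delta>" for X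
  proof -
    define nu where "nu = norm (negpart X)"
    obtain Xb where Xb: "Xb \<in> Proj Splus X" using Proj_ex[OF rn] by blast
    have XbS: "Xb \<in> Splus" and Xbmin: "\<And>Z. Z \<in> Splus \<Longrightarrow> dist X Xb \<le> dist X Z"
      using Xb by (auto simp: Proj_def)
    obtain Z where ZS: "Z \<in> Splus" and dZ: "dist X Z \<le> c * nu"
      using eb XS dX by (auto simp: \<delta>_def nu_def)
    have d1: "dist X Xb \<le> c * nu" using Xbmin[OF ZS] dZ by simp
    have pcX: "f X - f Xb \<ge> - L' * (dist X Xb)\<^sup>2"
      using pc XS dX Xb unfolding proj_cond_def \<delta>_def by auto
    have "(dist X Xb)\<^sup>2 \<le> (c * nu)\<^sup>2" using d1 by (intro power_mono) auto
    then have "L' * (dist X Xb)\<^sup>2 \<le> L' * (c * nu)\<^sup>2" using L0 by (rule mult_left_mono)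
    then have A: "f X - f Xb \<ge> - (c\<^sup>2 * L' * nu\<^sup>2)" using pcX by (simp add: power_mult_distrib algebra_simps)
    have "dist Xb Xs \<le> dist Xb X + dist X Xs" by (rule dist_triangle)
    also have "\<dots> \<le> 2 * dist X Xs" using Xbmin[OF XsS] by (simp add: dist_commute)
    also have "\<dots> < e" using dX e0 by (simp add: \<delta>_def)
    finally have "f Xs \<le> f Xb" using emin XbS by blast
    then show ?thesis using A by (simp add: nu_def)
  qed
  then show ?thesis using \<delta>0 by blast
qed

lemma eb_exists:
  fixes Xs :: "real^'r^'n"
  assumes XsS: "Xs \<in> Splus" and h: "\<not> has_zero_row Xs \<or> CARD('r) = 1"
  shows "\<exists>d0>0. \<exists>c\<ge>0. \<forall>X\<in>Stiefel. dist X Xs \<le> d0 \<longrightarrow> (\<exists>Z\<in>Splus. dist X Z \<le> c * norm (negpart X))"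
  using h
proof
  assume nz: "\<not> has_zero_row Xs"
  define m where "m = min_nonzero_entry Xs"
  have m0: "0 < m" using mne_facts[OF XsS nz] by (simp add: m_def)
  have "0 \<le> 6/5 + 9/5 * sqrt (real CARD('n) * real CARD('r)) / m" using m0 by simp
  moreover have "0 < m/12" using m0 by simp
  ultimately show ?thesis using eb_main[OF XsS nz] unfolding m_def by blast
next
  assume r1: "CARD('r) = 1"
  have *: "\<forall>X\<in>Stiefel. dist X Xs \<le> 1 \<longrightarrow> (\<exists>Z\<in>Splus. dist X Z \<le> 2 * norm (negpart X))"
    using eb_r1[OF r1] by blast
  show ?thesis
    apply (rule exI[of _ 1])
    apply (rule conjI)
     apply simp
    apply (rule exI[of _ 2])
    using * by simp
qed

lemma concl:
  fixes f :: "real^'r^'n \<Rightarrow> real" and Xs :: "real^'r^'n"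
  assumes rn: "CARD('r) \<le> CARD('n)" and lm: "local_min_P f Xs"
    and nzh: "CARD('n) > CARD('r) \<and> CARD('r) > 1 \<longrightarrow> \<not> has_zero_row Xs"
    and d'0: "0 < d'" and L0: "0 < L'" and pc: "proj_cond f Xs d' L'"
  shows "conclusions f Xs L'"
proof -
  have XsS: "Xs \<in> Splus" using lm by (simp add: local_min_P_def)
  have P1: "\<exists>\<delta>>0. \<forall>X \<in> Stiefel. dist X Xs \<le> \<delta> \<longrightarrow>
             f X - f Xs + k\<^sup>2 * L' * (norm (negpart X))\<^sup>2 \<ge> 0"
    if k0: "k > 0" and H: "\<forall>Z \<in> (Stiefel :: (real^'r^'n) set). infdist Z Splus \<le> k * infdist Z Nonneg" for k
  proof -
    have eb: "\<forall>X\<in>Stiefel. dist X Xs \<le> 1 \<longrightarrow> (\<exists>Z\<in>Splus. dist X Z \<le> k * norm (negpart X))"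
    proof (intro ballI impI)
      fix X :: "real^'r^'n" assume XS: "X \<in> Stiefel"
      obtain Xb where Xb: "Xb \<in> Proj Splus X" using Proj_ex[OF rn] by blast
      have "dist X Xb = infdist X Splus" by (rule Proj_infdist[OF Xb])
      also have "\<dots> \<le> k * infdist X Nonneg" using H XS by blast
      also have "\<dots> \<le> k * norm (negpart X)" using k0 infdist_Nonneg[of X] by (intro mult_left_mono) auto
      finally show "\<exists>Z\<in>Splus. dist X Z \<le> k * norm (negpart X)" using Xb by (auto simp: Proj_def)
    qed
    show ?thesis using loc_ineq[OF rn lm pc _ _ _ d'0 eb] L0 k0 by simp
  qed
  have P2: "\<exists>\<delta>>0. \<forall>\<epsilon>\<ge>0. \<forall>X.
              X \<in> Stiefel \<and> (norm (negpart X))\<^sup>2 = \<epsilon> \<and> dist X Xs \<le> \<delta> \<longrightarrow>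
              f X - f Xs + ((21/10) * sqrt (real CARD('r)) * (1 + 3 * real CARD('r) * (real CARD('n) - real CARD('r))) / min_nonzero_entry Xs)\<^sup>2 * L' * (norm (negpart X))\<^sup>2 \<ge> 0"
    if nr: "CARD('n) > CARD('r) \<and> CARD('r) > 1"
  proof -
    define \<kappa> where "\<kappa> = (21/10) * sqrt (real CARD('r)) * (1 + 3 * real CARD('r) * (real CARD('n) - real CARD('r))) / min_nonzero_entry Xs"
    define m where "m = min_nonzero_entry Xs"
    have nz: "\<not> has_zero_row Xs" using nzh nr by blast
    have m0: "0 < m" and m1: "m \<le> 1" using mne_facts[OF XsS nz] by (auto simp: m_def)
    have cle: "6/5 + 9/5 * sqrt (real CARD('n) * real CARD('r)) / m \<le> \<kappa>"
      unfolding \<kappa>_def m_def[symmetric]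
      using nr m0 m1 by (intro const_le) auto
    have c0: "0 \<le> 6/5 + 9/5 * sqrt (real CARD('n) * real CARD('r)) / m" using m0 by simp
    have eb: "\<forall>X\<in>Stiefel. dist X Xs \<le> m/12 \<longrightarrow> (\<exists>Z\<in>Splus. dist X Z \<le> \<kappa> * norm (negpart X))"
    proof (intro ballI impI)
      fix X :: "real^'r^'n" assume XS: "X \<in> Stiefel" and dX: "dist X Xs \<le> m/12"
      obtain Z where ZS: "Z \<in> Splus" and dZ: "dist X Z \<le> (6/5 + 9/5 * sqrt (real CARD('n) * real CARD('r)) / m) * norm (negpart X)"
        using eb_main[OF XsS nz XS] dX by (auto simp: m_def)
      have "(6/5 + 9/5 * sqrt (real CARD('n) * real CARD('r)) / m) * norm (negpart X) \<le> \<kappa> * norm (negpart X)"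
        using cle by (intro mult_right_mono) auto
      then show "\<exists>Z\<in>Splus. dist X Z \<le> \<kappa> * norm (negpart X)" using ZS dZ by force
    qed
    have k0: "0 \<le> \<kappa>" using c0 cle by linarith
    obtain \<delta> where \<delta>0: "\<delta> > 0" and H: "\<forall>X\<in>Stiefel. dist X Xs \<le> \<delta> \<longrightarrow> 0 \<le> f X - f Xs + \<kappa>\<^sup>2 * L' * (norm (negpart X))\<^sup>2"
      using loc_ineq[OF rn lm pc _ k0 _ d'0 eb] L0 m0 by auto
    show ?thesis unfolding \<kappa>_def[symmetric] using \<delta>0 H by blast
  qed
  show ?thesis unfolding conclusions_def Let_def
    using P1 P2 by blast
qed

lemma penalty:
  fixes f :: "real^'r^'n \<Rightarrow> real"
  assumes rn: "CARD('r) \<le> CARD('n)" and cont: "continuous_on Stiefel f"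
    and H: "\<And>Xs. global_min_P f Xs \<Longrightarrow> (\<exists>\<delta>>0. \<exists>C\<ge>0. \<forall>X\<in>Stiefel. dist X Xs \<le> \<delta> \<longrightarrow> 0 \<le> f X - f Xs + C * (norm (negpart X))\<^sup>2)"
  shows "\<exists>\<rho>h>0. \<forall>\<rho>\<ge>\<rho>h. argmin_on Stiefel (\<lambda>X. f X + \<rho> * (norm (negpart X))\<^sup>2) = argmin_on Splus f"
proof -
  have sub: "(Splus :: (real^'r^'n) set) \<subseteq> Stiefel" by (auto simp: Splus_def)
  have ne: "(Splus :: (real^'r^'n) set) \<noteq> {}" using Splus_nonempty[OF rn] by auto
  obtain Xm where XmS: "Xm \<in> Splus" and Xmmin: "\<forall>Y\<in>Splus. f Xm \<le> f Y"
    using continuous_attains_inf[OF compact_Splus ne continuous_on_subset[OF cont sub]] by blast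
  define fs where "fs = f Xm"
  define g where "g X = (norm (negpart X))\<^sup>2" for X :: "real^'r^'n"
  have g0: "0 \<le> g X" for X by (simp add: g_def)
  have claim: "\<exists>\<rho>0\<ge>0. \<forall>X\<in>Stiefel. fs \<le> f X + \<rho>0 * g X"
  proof (rule ccontr)
    assume "\<not> ?thesis"
    then have "\<forall>k::nat. \<exists>X. X \<in> Stiefel \<and> f X + real k * g X < fs"
      by (metis not_le of_nat_0_le_iff)
    then obtain Xk where Xk: "\<And>k. Xk k \<in> Stiefel" "\<And>k. f (Xk k) + real k * g (Xk k) < fs"
      by metis
    obtain l r where lS: "l \<in> Stiefel" and r: "strict_mono r" and lim: "(Xk \<circ> r) \<longlonglongrightarrow> l"
      using compact_imp_seq_compact[OF compact_Stiefel] Xk(1) unfolding seq_compact_def by metis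
    have neS: "(Stiefel :: (real^'r^'n) set) \<noteq> {}" using XmS sub by auto
    obtain Xb where "Xb \<in> Stiefel" and Bmin: "\<forall>Y\<in>Stiefel. f Xb \<le> f Y"
      using continuous_attains_inf[OF compact_Stiefel neS cont] by blast
    define B where "B = f Xb"
    have fB: "B \<le> f (Xk k)" for k using Bmin Xk(1) by (simp add: B_def)
    have gk: "g (Xk k) \<le> (fs - B) / real k" if "k > 0" for k
    proof -
      have "real k * g (Xk k) \<le> fs - B" using Xk(2)[of k] fB[of k] by linarith
      then show ?thesis using that by (simp add: field_simps)
    qed
    have limg: "(\<lambda>j. g (Xk (r j))) \<longlonglongrightarrow> g l"
    proof -
      have "(\<lambda>j. norm (negpart (Xk (r j)))) \<longlonglongrightarrow> norm (negpart l)"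
        using continuous_on_tendsto_compose[OF cont_negpart[of UNIV] lim] by (simp add: o_def)
      then show ?thesis unfolding g_def by (rule tendsto_power)
    qed
    have lim0: "(\<lambda>j. (fs - B) / real (r j)) \<longlonglongrightarrow> 0"
      using LIMSEQ_subseq_LIMSEQ[OF lim_const_over_n[of "fs - B"] r] by (simp add: o_def)
    have "g l \<le> 0"
    proof (rule LIMSEQ_le[OF limg lim0])
      show "\<exists>N. \<forall>n\<ge>N. g (Xk (r n)) \<le> (fs - B) / real (r n)"
      proof (intro exI[of _ 1] allI impI)
        fix n :: nat assume "1 \<le> n"
        then have "0 < r n" using seq_suble[OF r, of n] by linarith
        then show "g (Xk (r n)) \<le> (fs - B) / real (r n)" by (rule gk)
      qed
    qed
    then have "norm (negpart l) = 0" using g0[of l] by (simp add: g_def)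
    then have "l \<in> Nonneg" by (rule negpart_zero)
    then have lSp: "l \<in> Splus" using lS by (simp add: Splus_def)
    have limf: "(\<lambda>j. f (Xk (r j))) \<longlonglongrightarrow> f l"
      using continuous_on_tendsto_compose[OF cont lim lS] Xk(1) by (simp add: o_def)
    have "f l \<le> fs"
    proof (rule LIMSEQ_le_const2[OF limf])
      have "f (Xk k) \<le> fs" for k
      proof -
        have "0 \<le> real k * g (Xk k)" using g0 by simp
        then show ?thesis using Xk(2)[of k] by linarith
      qed
      then show "\<exists>N. \<forall>n\<ge>N. f (Xk (r n)) \<le> fs" by blast
    qed
    then have "global_min_P f l" using lSp Xmmin by (auto simp: global_min_P_def fs_def)
    then obtain \<delta> C where \<delta>0: "\<delta> > 0" and C0: "C \<ge> 0"
      and HC: "\<forall>X\<in>Stiefel. dist X l \<le> \<delta> \<longrightarrow> 0 \<le> f X - f l + C * g X"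
      using H unfolding g_def by blast
    obtain N1 where N1: "\<forall>n\<ge>N1. dist ((Xk \<circ> r) n) l < \<delta>"
      using lim \<delta>0 unfolding lim_sequentially by blast
    define j where "j = max N1 (nat \<lceil>C\<rceil>)"
    have dj: "dist (Xk (r j)) l \<le> \<delta>" using N1 by (simp add: j_def less_imp_le)
    have "C \<le> real j" unfolding j_def by linarith
    also have "\<dots> \<le> real (r j)" using seq_suble[OF r, of j] by simp
    finally have Cr: "C * g (Xk (r j)) \<le> real (r j) * g (Xk (r j))" using g0 by (intro mult_right_mono) auto
    have "fs \<le> f l" using Xmmin lSp by (simp add: fs_def)
    moreover have "0 \<le> f (Xk (r j)) - f l + C * g (Xk (r j))" using HC Xk(1) dj by blast
    moreover have "f (Xk (r j)) + real (r j) * g (Xk (r j)) < fs" by (rule Xk(2))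
    ultimately show False using Cr by linarith
  qed
  then obtain \<rho>0 where \<rho>00: "\<rho>0 \<ge> 0" and \<rho>0: "\<forall>X\<in>Stiefel. fs \<le> f X + \<rho>0 * g X" by blast
  have main: "argmin_on Stiefel (\<lambda>X. f X + \<rho> * g X) = argmin_on Splus f" if \<rho>: "\<rho> \<ge> 2 * \<rho>0 + 1" for \<rho>
  proof
    show "argmin_on Splus f \<subseteq> argmin_on Stiefel (\<lambda>X. f X + \<rho> * g X)"
    proof
      fix X assume "X \<in> argmin_on Splus f"
      then have XS: "X \<in> Splus" and Xm: "\<forall>Y\<in>Splus. f X \<le> f Y" by (auto simp: argmin_on_def)
      have gX: "g X = 0" using XS by (simp add: g_def Splus_def Nonneg_def negpart_def vec_eq_iff)
      have fX: "f X = fs" using Xm Xmmin XS XmS by (simp add: fs_def order_antisym)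
      have "f X + \<rho> * g X \<le> f Y + \<rho> * g Y" if YS: "Y \<in> Stiefel" for Y
      proof -
        have "\<rho>0 * g Y \<le> \<rho> * g Y" using \<rho> \<rho>00 g0[of Y] by (intro mult_right_mono) auto
        then show ?thesis using \<rho>0 YS gX fX by force
      qed
      then show "X \<in> argmin_on Stiefel (\<lambda>X. f X + \<rho> * g X)" using XS sub by (auto simp: argmin_on_def)
    qed
  next
    show "argmin_on Stiefel (\<lambda>X. f X + \<rho> * g X) \<subseteq> argmin_on Splus f"
    proof
      fix X assume "X \<in> argmin_on Stiefel (\<lambda>X. f X + \<rho> * g X)"
      then have XS: "X \<in> Stiefel" and Xm: "\<forall>Y\<in>Stiefel. f X + \<rho> * g X \<le> f Y + \<rho> * g Y"
        by (auto simp: argmin_on_def)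
      have gXm: "g Xm = 0" using XmS by (simp add: g_def Splus_def Nonneg_def negpart_def vec_eq_iff)
      have "f X + \<rho> * g X \<le> fs" using Xm XmS sub gXm by (force simp: fs_def)
      moreover have "fs \<le> f X + \<rho>0 * g X" using \<rho>0 XS by blast
      ultimately have "(\<rho> - \<rho>0) * g X \<le> 0" by (simp add: algebra_simps)
      moreover have "\<rho> - \<rho>0 > 0" using \<rho> \<rho>00 by linarith
      ultimately have "g X \<le> 0" by (simp add: mult_le_0_iff)
      then have "norm (negpart X) = 0" using g0[of X] by (simp add: g_def)
      then have XSp: "X \<in> Splus" using XS negpart_zero by (simp add: Splus_def)
      have gX0: "g X = 0" using \<open>norm (negpart X) = 0\<close> by (simp add: g_def)
      have "f X \<le> f Y" if "Y \<in> Splus" for Y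
      proof -
        have "g Y = 0" using that by (simp add: g_def Splus_def Nonneg_def negpart_def vec_eq_iff)
        then show ?thesis using Xm that sub gX0 by force
      qed
      then show "X \<in> argmin_on Splus f" using XSp by (simp add: argmin_on_def)
    qed
  qed
  show ?thesis
    using main unfolding g_def by (intro exI[of _ "2 * \<rho>0 + 1"]) (use \<rho>00 in auto)
qed

theorem corollary3p12:
  fixes f :: "real^'r^'n \<Rightarrow> real" and Om :: "(real^'r^'n) set"
  assumes "CARD('r) \<le> CARD('n)"
    and "open Om" and "Stiefel \<subseteq> Om"
    and "\<exists>f'. (\<forall>X \<in> Om. (f has_derivative blinfun_apply (f' X)) (at X)) \<and> continuous_on Om f'"
  shows
    "((CARD('n) > CARD('r) \<and> CARD('r) > 1 \<longrightarrow>
          (\<forall>Xs. global_min_P f Xs \<longrightarrow> \<not> has_zero_row Xs))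
       \<and> (\<forall>Xs. global_min_P f Xs \<longrightarrow> (\<exists>\<delta>'>0. \<exists>L'>0. proj_cond f Xs \<delta>' L'))
      \<longrightarrow>
        (\<forall>Xs. global_min_P f Xs \<longrightarrow>
           (\<forall>\<delta>' L'. \<delta>' > 0 \<longrightarrow> L' > 0 \<longrightarrow> proj_cond f Xs \<delta>' L' \<longrightarrow> conclusions f Xs L'))
        \<and> (\<exists>\<rho>h>0. \<forall>\<rho>\<ge>\<rho>h.
              argmin_on Stiefel (\<lambda>X. f X + \<rho> * (norm (negpart X))\<^sup>2) = argmin_on Splus f))
   \<and> ((CARD('n) > CARD('r) \<and> CARD('r) > 1 \<longrightarrow>
          (\<forall>Xs. local_min_P f Xs \<longrightarrow> \<not> has_zero_row Xs))
       \<and> (\<forall>Xs. local_min_P f Xs \<longrightarrow> (\<exists>\<delta>'>0. \<exists>L'>0. proj_cond f Xs \<delta>' L'))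
      \<longrightarrow>
        (\<forall>Xs. local_min_P f Xs \<longrightarrow>
           (\<forall>\<delta>' L'. \<delta>' > 0 \<longrightarrow> L' > 0 \<longrightarrow> proj_cond f Xs \<delta>' L' \<longrightarrow> conclusions f Xs L')))"
proof -
  have rn: "CARD('r) \<le> CARD('n)" by (rule assms(1))
  have cont: "continuous_on Stiefel f"
  proof -
    obtain f' where fd: "\<forall>X \<in> Om. (f has_derivative blinfun_apply (f' X)) (at X)" using assms(4) by blast
    have "isCont f X" if "X \<in> Stiefel" for X
      using fd assms(3) that has_derivative_continuous by blast
    then show ?thesis by (intro continuous_at_imp_continuous_on) blast
  qed
  have glob_loc: "local_min_P f Xs" if "global_min_P f Xs" for Xs
    using that unfolding global_min_P_def local_min_P_def by (auto intro: exI[of _ 1])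
  have G: "(\<forall>Xs. global_min_P f Xs \<longrightarrow>
           (\<forall>\<delta>' L'. \<delta>' > 0 \<longrightarrow> L' > 0 \<longrightarrow> proj_cond f Xs \<delta>' L' \<longrightarrow> conclusions f Xs L'))
        \<and> (\<exists>\<rho>h>0. \<forall>\<rho>\<ge>\<rho>h.
              argmin_on Stiefel (\<lambda>X. f X + \<rho> * (norm (negpart X))\<^sup>2) = argmin_on Splus f)"
    if A: "CARD('n) > CARD('r) \<and> CARD('r) > 1 \<longrightarrow> (\<forall>Xs. global_min_P f Xs \<longrightarrow> \<not> has_zero_row Xs)"
      and B: "\<forall>Xs. global_min_P f Xs \<longrightarrow> (\<exists>\<delta>'>0. \<exists>L'>0. proj_cond f Xs \<delta>' L')"
  proof
    show "\<forall>Xs. global_min_P f Xs \<longrightarrow>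
           (\<forall>\<delta>' L'. \<delta>' > 0 \<longrightarrow> L' > 0 \<longrightarrow> proj_cond f Xs \<delta>' L' \<longrightarrow> conclusions f Xs L')"
      using concl[OF rn glob_loc] A by blast
  next
    have H: "\<exists>\<delta>>0. \<exists>C\<ge>0. \<forall>X\<in>Stiefel. dist X Xs \<le> \<delta> \<longrightarrow> 0 \<le> f X - f Xs + C * (norm (negpart X))\<^sup>2"
      if gm: "global_min_P f Xs" for Xs
    proof -
      have XsS: "Xs \<in> Splus" using gm by (simp add: global_min_P_def)
      obtain d' L' where d'0: "d' > 0" and L0: "L' > 0" and pc: "proj_cond f Xs d' L'" using B gm by blast
      have "\<not> has_zero_row Xs \<or> CARD('r) = 1"
      proof (cases "CARD('r) = 1")
        case False
        show ?thesis
        proof (cases "CARD('n) = CARD('r)")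
          case True
          then show ?thesis using no_zero_row_square[OF XsS] by blast
        next
          case False
          have "CARD('r) \<ge> 1" by (simp add: Suc_leI)
          then have "CARD('n) > CARD('r) \<and> CARD('r) > 1" using False \<open>CARD('r) \<noteq> 1\<close> rn by linarith
          then show ?thesis using A gm by blast
        qed
      qed simp
      then obtain d0 c where d0: "d0 > 0" and c0: "c \<ge> 0"
        and eb: "\<forall>X\<in>Stiefel. dist X Xs \<le> d0 \<longrightarrow> (\<exists>Z\<in>Splus. dist X Z \<le> c * norm (negpart X))"
        using eb_exists[OF XsS] by blast
      obtain \<delta> where "\<delta> > 0" "\<forall>X\<in>Stiefel. dist X Xs \<le> \<delta> \<longrightarrow> 0 \<le> f X - f Xs + c\<^sup>2 * L' * (norm (negpart X))\<^sup>2"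
        using loc_ineq[OF rn glob_loc[OF gm] pc _ c0 d0 d'0 eb] L0 by auto
      moreover have "0 \<le> c\<^sup>2 * L'" using L0 by simp
      ultimately show ?thesis by blast
    qed
    show "\<exists>\<rho>h>0. \<forall>\<rho>\<ge>\<rho>h.
              argmin_on Stiefel (\<lambda>X. f X + \<rho> * (norm (negpart X))\<^sup>2) = argmin_on Splus f"
      by (rule penalty[OF rn cont H])
  qed
  have L: "\<forall>Xs. local_min_P f Xs \<longrightarrow>
           (\<forall>\<delta>' L'. \<delta>' > 0 \<longrightarrow> L' > 0 \<longrightarrow> proj_cond f Xs \<delta>' L' \<longrightarrow> conclusions f Xs L')"
    if A: "CARD('n) > CARD('r) \<and> CARD('r) > 1 \<longrightarrow> (\<forall>Xs. local_min_P f Xs \<longrightarrow> \<not> has_zero_row Xs)"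
    using concl[OF rn] A by blast
  show ?thesis using G L by blast
qed

end
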